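(* Every solution of system (CSF) has bounded velocities: there is a constant $C<\infty$, depending only on the initial data and the parameters, such that $\max_i|\mathbf v_i(t)|\le C$ for all $t\ge0$.
   Context: Fix integers $N\ge1$, $n\ge1$, masses $m_1,\dots,m_N>0$ with $M=\sum_i m_i$, parameters $\sigma>0$, $p>0$, $\kappa\ge0$, and a communication kernel $\phi:[0,\infty)\to(0,\infty)$ that is smooth, positive and non-increasing. Write $\phi_{ij}=\phi(|\mathbf x_i-\mathbf x_j|)$, with $|\cdot|$ the Euclidean norm on $\mathbb R^n$. System (CSF) is, for $i=1,\dots,N$, $$\dot{\mathbf x}_i=\mathbf v_i,\qquad \dot{\mathbf v}_i=\sum_{j=1}^N m_j\phi_{ij}(\mathbf v_j-\mathbf v_i)+\sigma(\theta_i-|\mathbf v_i|^p)\mathbf v_i,\qquad \dot\theta_i=\kappa\sum_{j=1}^N m_j\phi_{ij}(\theta_j-\theta_i),$$ with $\mathbf x_i,\mathbf v_i\in\mathbb R^n$ and initial values $\theta_i(0)>0$; solutions are considered for $t\ge0$. *)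

theory Defs
  imports "HOL-Analysis.Analysis"
begin

definition smooth_on_real :: "(real \<Rightarrow> real) \<Rightarrow> real set \<Rightarrow> bool" where
  "smooth_on_real f S \<longleftrightarrow>
     (\<exists>D::nat \<Rightarrow> real \<Rightarrow> real. D 0 = f \<and>
        (\<forall>k. \<forall>t\<in>S. (D k has_real_derivative D (Suc k) t) (at t within S)))"

definition CSF_solution ::
  "nat \<Rightarrow> (nat \<Rightarrow> real) \<Rightarrow> real \<Rightarrow> real \<Rightarrow> real \<Rightarrow> (real \<Rightarrow> real)
   \<Rightarrow> (nat \<Rightarrow> real \<Rightarrow> real^'n) \<Rightarrow> (nat \<Rightarrow> real \<Rightarrow> real^'n) \<Rightarrow> (nat \<Rightarrow> real \<Rightarrow> real) \<Rightarrow> bool"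
where
  "CSF_solution N m \<sigma> p \<kappa> \<phi> x v \<theta> \<longleftrightarrow>
    (\<forall>i<N. \<forall>t\<ge>0.
       (x i has_vector_derivative v i t) (at t within {0..}) \<and>
       (v i has_vector_derivative
          ((\<Sum>j<N. (m j * \<phi> (norm (x i t - x j t))) *\<^sub>R (v j t - v i t))
           + (\<sigma> * (\<theta> i t - norm (v i t) powr p)) *\<^sub>R v i t)) (at t within {0..}) \<and>
       (\<theta> i has_real_derivative
          (\<kappa> * (\<Sum>j<N. m j * \<phi> (norm (x i t - x j t)) * (\<theta> j t - \<theta> i t)))) (at t within {0..}))"

end

theory Submission imports Defs begin

lemma inner_self_deriv:
  fixes v :: "real \<Rightarrow> 'a::real_inner"
  assumes "(v has_vector_derivative v') (at t within S)"
  shows "((\<lambda>t. v t \<bullet> v t) has_real_derivative 2*(v t \<bullet> v')) (at t within S)"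
proof -
  have d: "(v has_derivative (\<lambda>h. h *\<^sub>R v')) (at t within S)"
    using assms by (simp add: has_vector_derivative_def)
  have "((\<lambda>t. v t \<bullet> v t) has_derivative (\<lambda>h. v t \<bullet> (h *\<^sub>R v') + (h *\<^sub>R v') \<bullet> v t)) (at t within S)"
    by (rule has_derivative_inner[OF d d])
  moreover have "(\<lambda>h. v t \<bullet> (h *\<^sub>R v') + (h *\<^sub>R v') \<bullet> v t) = (\<lambda>h. (2*(v t \<bullet> v')) * h)"
    by (auto simp: inner_commute algebra_simps)
  ultimately show ?thesis by (simp add: has_field_derivative_def)
qed

lemma barrier:
  fixes g g' :: "nat \<Rightarrow> real \<Rightarrow> real"
  assumes der: "\<forall>i<N. \<forall>t\<ge>0. (g i has_real_derivative g' i t) (at t within {0..})"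
    and init: "\<forall>i<N. g i 0 < L"
    and neg: "\<forall>i<N. \<forall>t>0. (\<forall>j<N. g j t \<le> L) \<longrightarrow> g i t = L \<longrightarrow> g' i t < 0"
  shows "\<forall>i<N. \<forall>t\<ge>0. g i t < L"
proof (rule ccontr)
  assume "\<not> ?thesis"
  then obtain i0 t0 where i0: "i0 < N" "t0 \<ge> 0" "L \<le> g i0 t0" by force
  define S where "S = (\<Union>i<N. {t \<in> {0..}. (\<lambda>_. L) t \<le> g i t})"
  have cont: "continuous_on {0..} (g i)" if "i < N" for i
    using der that by (auto simp: continuous_on_eq_continuous_within intro: DERIV_continuous)
  have "closed S" unfolding S_def
    by (intro closed_UN ballI continuous_on_closed_Collect_le cont continuous_on_const) auto
  moreover have "t0 \<in> S" using i0 by (auto simp: S_def)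
  moreover have bdd: "bdd_below S" unfolding S_def by (auto intro!: bdd_belowI[of _ 0])
  ultimately have ts: "Inf S \<in> S" using closed_contains_Inf by blast
  define ts where "ts = Inf S"
  obtain i where i: "i < N" "L \<le> g i ts" "ts \<ge> 0" using ts by (auto simp: S_def ts_def)
  have notS: "\<forall>j<N. g j s < L" if "0 \<le> s" "s < ts" for s
  proof (intro allI impI, rule ccontr)
    fix j assume "j < N" "\<not> g j s < L"
    hence "s \<in> S" using that \<open>j<N\<close> by (auto simp: S_def not_less)
    hence "ts \<le> s" using cInf_lower[OF _ bdd] ts_def by auto
    thus False using that by auto
  qed
  have tpos: "ts > 0"
  proof (rule ccontr)
    assume "\<not> ts > 0" hence "ts = 0" using i by auto
    thus False using i init by force
  qed
  have atS: "at ts within {0..} = at ts"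
    using tpos by (intro at_within_interior) (simp add: interior_real_atLeast)
  have le: "g j ts \<le> L" if "j < N" for j
  proof (rule ccontr)
    assume a: "\<not> g j ts \<le> L"
    have "isCont (g j) ts" using der that i atS by (metis DERIV_isCont)
    then obtain d where d: "d > 0" "\<forall>x'. dist x' ts < d \<longrightarrow> dist (g j x') (g j ts) < g j ts - L"
      using a unfolding continuous_at_eps_delta by (meson diff_gt_0_iff_gt not_le)
    define s where "s = ts - min d ts / 2"
    have "dist s ts < d" "0 \<le> s" "s < ts" using d tpos by (auto simp: s_def dist_real_def)
    hence "\<bar>g j s - g j ts\<bar> < g j ts - L" using d(2) by (metis dist_real_def)
    hence "g j s > L" by auto
    moreover have "g j s < L" using notS that \<open>0 \<le> s\<close> \<open>s < ts\<close> by auto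
    ultimately show False by simp
  qed
  hence "g' i ts < 0" using neg i tpos by (metis order_antisym)
  then obtain d where d: "d > 0" "\<forall>h>0. ts - h \<in> {0..} \<longrightarrow> h < d \<longrightarrow> g i ts < g i (ts - h)"
    using has_real_derivative_neg_dec_left der i by blast
  define s where "s = ts - min d ts / 2"
  have "0 \<le> s" "s < ts" "ts - s < d" using d tpos by (auto simp: s_def)
  hence "g i ts < g i s" using d(2)[rule_format, of "ts - s"] by auto
  moreover have "g i s < L" using notS i \<open>0 \<le> s\<close> \<open>s < ts\<close> by auto
  ultimately show False using le i by force
qed
theorem mainTheorem4:
  fixes N :: nat and m :: "nat \<Rightarrow> real" and \<sigma> p \<kappa> :: real and \<phi> :: "real \<Rightarrow> real"
    and x v :: "nat \<Rightarrow> real \<Rightarrow> real^'n" and \<theta> :: "nat \<Rightarrow> real \<Rightarrow> real"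
  assumes "N \<ge> 1"
    and "\<forall>i<N. m i > 0"
    and "\<sigma> > 0" and "p > 0" and "\<kappa> \<ge> 0"
    and "smooth_on_real \<phi> {0..}"
    and "\<forall>r\<ge>0. \<phi> r > 0"
    and "\<forall>r s. 0 \<le> r \<longrightarrow> r \<le> s \<longrightarrow> \<phi> s \<le> \<phi> r"
    and "\<forall>i<N. \<theta> i 0 > 0"
    and "CSF_solution N m \<sigma> p \<kappa> \<phi> x v \<theta>"
  shows "\<exists>C. \<forall>t\<ge>0. \<forall>i<N. norm (v i t) \<le> C"
proof -
  note sol = assms(10)[unfolded CSF_solution_def]
  have w: "m j * \<phi> (norm (x i t - x j t)) \<ge> 0" if "j < N" for i j t
    using assms(2,7) that by (simp add: less_imp_le)
  define \<Theta> where "\<Theta> = Max ((\<lambda>j. \<theta> j 0) ` {..<N})"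
  have Th0: "\<theta> j 0 \<le> \<Theta>" if "j < N" for j
    unfolding \<Theta>_def using that by (intro Max_ge) auto
  have Thpos: "\<Theta> > 0" using Th0[of 0] assms(1,9) by force
  have thb: "\<theta> i t \<le> \<Theta>" if "i < N" "t \<ge> 0" for i t
  proof (rule ccontr)
    assume "\<not> \<theta> i t \<le> \<Theta>"
    define \<epsilon> where "\<epsilon> = (\<theta> i t - \<Theta>) / (1 + t) / 2"
    have ep: "\<epsilon> > 0" using \<open>\<not> \<theta> i t \<le> \<Theta>\<close> that by (simp add: \<epsilon>_def)
    have "\<forall>i<N. \<forall>t\<ge>0. \<theta> i t - \<epsilon> * t < \<Theta> + \<epsilon>"
    proof (rule barrier[where g' = "\<lambda>i t. \<kappa> * (\<Sum>j<N. m j * \<phi> (norm (x i t - x j t)) * (\<theta> j t - \<theta> i t)) - \<epsilon>"])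
      show "\<forall>i<N. \<forall>t\<ge>0. ((\<lambda>t. \<theta> i t - \<epsilon> * t) has_real_derivative
          \<kappa> * (\<Sum>j<N. m j * \<phi> (norm (x i t - x j t)) * (\<theta> j t - \<theta> i t)) - \<epsilon>) (at t within {0..})"
      proof (intro allI impI)
        fix i t :: _ assume "i < N" "(t::real) \<ge> 0"
        hence h: "(\<theta> i has_real_derivative \<kappa> * (\<Sum>j<N. m j * \<phi> (norm (x i t - x j t)) * (\<theta> j t - \<theta> i t))) (at t within {0..})"
          using sol by blast
        show "((\<lambda>t. \<theta> i t - \<epsilon> * t) has_real_derivative
          \<kappa> * (\<Sum>j<N. m j * \<phi> (norm (x i t - x j t)) * (\<theta> j t - \<theta> i t)) - \<epsilon>) (at t within {0..})"
          using DERIV_diff[OF h DERIV_cmult[OF DERIV_ident, of \<epsilon>]] by simp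
      qed
      show "\<forall>i<N. \<theta> i 0 - \<epsilon> * 0 < \<Theta> + \<epsilon>" using Th0 ep by force
      show "\<forall>i<N. \<forall>t>0. (\<forall>j<N. \<theta> j t - \<epsilon> * t \<le> \<Theta> + \<epsilon>) \<longrightarrow> \<theta> i t - \<epsilon> * t = \<Theta> + \<epsilon> \<longrightarrow>
         \<kappa> * (\<Sum>j<N. m j * \<phi> (norm (x i t - x j t)) * (\<theta> j t - \<theta> i t)) - \<epsilon> < 0"
      proof (intro allI impI)
        fix i t assume a: "i < N" "(t::real) > 0" "\<forall>j<N. \<theta> j t - \<epsilon> * t \<le> \<Theta> + \<epsilon>" "\<theta> i t - \<epsilon> * t = \<Theta> + \<epsilon>"
        have "(\<Sum>j<N. m j * \<phi> (norm (x i t - x j t)) * (\<theta> j t - \<theta> i t)) \<le> 0"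
        proof (intro sum_nonpos)
          fix j assume "j \<in> {..<N}"
          hence "\<theta> j t - \<theta> i t \<le> 0" "m j * \<phi> (norm (x i t - x j t)) \<ge> 0" using a w by auto
          thus "m j * \<phi> (norm (x i t - x j t)) * (\<theta> j t - \<theta> i t) \<le> 0"
            by (simp add: mult_nonneg_nonpos)
        qed
        hence "\<kappa> * (\<Sum>j<N. m j * \<phi> (norm (x i t - x j t)) * (\<theta> j t - \<theta> i t)) \<le> 0"
          using assms(5) by (simp add: mult_nonneg_nonpos)
        thus "\<kappa> * (\<Sum>j<N. m j * \<phi> (norm (x i t - x j t)) * (\<theta> j t - \<theta> i t)) - \<epsilon> < 0" using ep by simp
      qed
    qed
    hence "\<theta> i t - \<epsilon> * t < \<Theta> + \<epsilon>" using that by blast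
    hence "\<theta> i t < \<Theta> + \<epsilon> * (1 + t)" by (simp add: algebra_simps)
    also have "\<epsilon> * (1 + t) = (\<theta> i t - \<Theta>) / 2" using that by (simp add: \<epsilon>_def field_simps)
    finally have "\<theta> i t < \<Theta> + (\<theta> i t - \<Theta>) / 2" .
    thus False using \<open>\<not> \<theta> i t \<le> \<Theta>\<close> by (simp add: field_simps)
  qed
  define K where "K = Max ((\<lambda>j. norm (v j 0)) ` {..<N}) + \<Theta> powr (1/p) + 1"
  have K0: "norm (v j 0) < K" if "j < N" for j
  proof -
    have "norm (v j 0) \<le> Max ((\<lambda>j. norm (v j 0)) ` {..<N})" using that by (intro Max_ge) auto
    thus ?thesis unfolding K_def by (smt (verit) powr_ge_zero)
  qed
  have K00: "norm (v 0 0) < K" using K0[of 0] assms(1) by simp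
  have Kpos: "K > 0" using K00 by (smt (verit) norm_ge_zero)
  have KTh: "K powr p > \<Theta>"
  proof -
    have "\<Theta> powr (1/p) < K"
    proof -
      have "norm (v 0 0) \<le> Max ((\<lambda>j. norm (v j 0)) ` {..<N})" using assms(1) by (intro Max_ge) auto
      thus ?thesis unfolding K_def by (smt (verit) norm_ge_zero)
    qed
    hence "(\<Theta> powr (1/p)) powr p < K powr p" using assms(4) by (intro powr_less_mono2) auto
    thus ?thesis using assms(4) Thpos by (simp add: powr_powr)
  qed
  define F where "F = (\<lambda>i t. (\<Sum>j<N. (m j * \<phi> (norm (x i t - x j t))) *\<^sub>R (v j t - v i t))
           + (\<sigma> * (\<theta> i t - norm (v i t) powr p)) *\<^sub>R v i t)"
  have "\<forall>i<N. \<forall>t\<ge>0. v i t \<bullet> v i t < K^2"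
  proof (rule barrier[where g' = "\<lambda>i t. 2 * (v i t \<bullet> F i t)"])
    show "\<forall>i<N. \<forall>t\<ge>0. ((\<lambda>t. v i t \<bullet> v i t) has_real_derivative 2 * (v i t \<bullet> F i t)) (at t within {0..})"
      using sol unfolding F_def by (blast intro: inner_self_deriv)
    show "\<forall>i<N. v i 0 \<bullet> v i 0 < K^2"
    proof (intro allI impI)
      fix i assume "i < N"
      hence "norm (v i 0) ^ 2 < K ^ 2" using K0 by (intro power_strict_mono) auto
      thus "v i 0 \<bullet> v i 0 < K^2" by (simp add: power2_norm_eq_inner)
    qed
    show "\<forall>i<N. \<forall>t>0. (\<forall>j<N. v j t \<bullet> v j t \<le> K^2) \<longrightarrow> v i t \<bullet> v i t = K^2 \<longrightarrow> 2 * (v i t \<bullet> F i t) < 0"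
    proof (intro allI impI)
      fix i t assume a: "i < N" "(t::real) > 0" "\<forall>j<N. v j t \<bullet> v j t \<le> K^2" "v i t \<bullet> v i t = K^2"
      have nj: "norm (v j t) \<le> K" if "j < N" for j
      proof -
        have "norm (v j t) ^ 2 \<le> K ^ 2" using a that by (simp add: power2_norm_eq_inner)
        thus ?thesis using Kpos power2_le_imp_le by force
      qed
      have ni: "norm (v i t) = K"
      proof -
        have "norm (v i t) ^ 2 = K ^ 2" using a by (simp add: power2_norm_eq_inner)
        thus ?thesis using Kpos by (simp add: power2_eq_iff_nonneg)
      qed
      have "v i t \<bullet> F i t = (\<Sum>j<N. (m j * \<phi> (norm (x i t - x j t))) * (v i t \<bullet> v j t - v i t \<bullet> v i t))
           + (\<sigma> * (\<theta> i t - norm (v i t) powr p)) * (v i t \<bullet> v i t)"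
        unfolding F_def by (simp add: inner_add_right inner_sum_right inner_diff_right)
      moreover have "(\<Sum>j<N. (m j * \<phi> (norm (x i t - x j t))) * (v i t \<bullet> v j t - v i t \<bullet> v i t)) \<le> 0"
      proof (intro sum_nonpos)
        fix j assume j: "j \<in> {..<N}"
        have "v i t \<bullet> v j t \<le> norm (v i t) * norm (v j t)" by (rule norm_cauchy_schwarz)
        also have "\<dots> \<le> K * K" using ni nj[of j] j Kpos by (simp add: mult_left_mono)
        finally have "v i t \<bullet> v j t - v i t \<bullet> v i t \<le> 0" using a by (simp add: power2_eq_square)
        thus "(m j * \<phi> (norm (x i t - x j t))) * (v i t \<bullet> v j t - v i t \<bullet> v i t) \<le> 0"
          using w[of j] j by (simp add: mult_nonneg_nonpos)
      qed
      moreover have "(\<sigma> * (\<theta> i t - norm (v i t) powr p)) * (v i t \<bullet> v i t) < 0"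
      proof -
        have "\<theta> i t - norm (v i t) powr p < 0" using thb[of i t] a KTh ni by auto
        hence "\<sigma> * (\<theta> i t - norm (v i t) powr p) < 0" using assms(3) by (simp add: mult_pos_neg)
        moreover have "v i t \<bullet> v i t > 0" using a Kpos by simp
        ultimately show ?thesis by (simp add: mult_neg_pos)
      qed
      ultimately show "2 * (v i t \<bullet> F i t) < 0" by linarith
    qed
  qed
  hence "\<forall>t\<ge>0. \<forall>i<N. norm (v i t) \<le> K"
  proof (intro allI impI)
    fix t i assume h: "\<forall>i<N. \<forall>t\<ge>0. v i t \<bullet> v i t < K^2" "(t::real) \<ge> 0" "i < N"
    hence "norm (v i t) ^ 2 \<le> K ^ 2" by (simp add: power2_norm_eq_inner less_imp_le)
    thus "norm (v i t) \<le> K" using Kpos power2_le_imp_le by force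
  qed
  thus ?thesis by blast
qed
end
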